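(* Let $\Delta>0$, $h>0$, $\alpha\ge 2$, $\mathrm{psd}_{\max}>0$, $\sigma^2>0$. For integers $i,j$ with $i\equiv j \pmod 2$ place a satellite at $\mathbf{s}_{i,j}=(i\Delta/2,\ j\Delta\sqrt3/2,\ h)$, and consider a ground user at $\mathbf{g}=(x,y,0)$, served by the satellite $\mathbf{s}_{0,0}$. Define $D_{i,j}(x,y)=\|\mathbf{s}_{i,j}-\mathbf{g}\|$, $\theta_{i,j}(x,y)=\cos^{-1}\bigl(h/D_{i,j}(x,y)\bigr)$, and $W_{i,j}(x,y)=w_s(\theta_{i,j}(x,y))\,w_g(\theta_{i,j}(x,y))$, where $w_s,w_g:[0,\pi]\to(0,1]$ are the (normalized) satellite and ground antenna patterns. Let $\mathcal{I}=\{(i,j)\in\mathbb{Z}^2: i\equiv j \pmod 2\}\setminus\{(0,0)\}$ and $$\mathrm{SNR}(x,y)=\frac{\mathrm{psd}_{\max}}{\sigma^2}D_{0,0}^{-\alpha}(x,y)W_{0,0}(x,y),\quad \mathrm{INR}(x,y)=\frac{\mathrm{psd}_{\max}}{\sigma^2}\sum_{(i,j)\in\mathcal{I}}D_{i,j}^{-\alpha}(x,y)W_{i,j}(x,y),$$ (assumed finite), and $\mathrm{SINR}(x,y)=\mathrm{SNR}(x,y)/(\mathrm{INR}(x,y)+1)$. Suppose (1) $\theta\mapsto w_s(\theta)w_g(\theta)$ is monotone decreasing on $[0,\pi]$, and (2) for every $(i,j)$ with $i\equiv j\pmod 2$, the ratio $W_{i,j}(x,y)/W_{0,0}(x,y)$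 is convex in $x$ and convex in $y$ on the region $-\Delta/2\le x\le\Delta/2$, $-\Delta\sqrt3/2\le y\le \Delta\sqrt3/2$. Then $\mathrm{SINR}(x,y)$ is maximized over $(x,y)\in\mathbb{R}^2$ at $(x,y)=(0,0)$.
   Context: Planar model of a LEO downlink: satellites lie on a hexagonal lattice in the plane at altitude $h$ above the ground plane, all satellite antennas point straight down and all ground antennas point straight up, so the off-axis angle at both ends of a link is $\theta_{i,j}(x,y)$. All satellites transmit at power spectral density $\mathrm{psd}_{\max}$. *)

theory Defs
  imports "HOL-Analysis.Analysis"
begin

text \<open>Satellite s_{i,j} = (i Delta/2, j Delta sqrt 3/2, h) in R^3 (as real x real x real,
  whose product norm is the Euclidean norm).\<close>
definition sat_pos :: "real \<Rightarrow> real \<Rightarrow> int \<Rightarrow> int \<Rightarrow> real \<times> real \<times> real" where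
  "sat_pos \<Delta> h i j = (real_of_int i * \<Delta> / 2, real_of_int j * \<Delta> * sqrt 3 / 2, h)"

definition Dij :: "real \<Rightarrow> real \<Rightarrow> int \<Rightarrow> int \<Rightarrow> real \<Rightarrow> real \<Rightarrow> real" where
  "Dij \<Delta> h i j x y = norm (sat_pos \<Delta> h i j - (x, y, 0))"

definition theta :: "real \<Rightarrow> real \<Rightarrow> int \<Rightarrow> int \<Rightarrow> real \<Rightarrow> real \<Rightarrow> real" where
  "theta \<Delta> h i j x y = arccos (h / Dij \<Delta> h i j x y)"

definition Wij :: "(real \<Rightarrow> real) \<Rightarrow> (real \<Rightarrow> real) \<Rightarrow> real \<Rightarrow> real \<Rightarrow> int \<Rightarrow> int \<Rightarrow> real \<Rightarrow> real \<Rightarrow> real" where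
  "Wij ws wg \<Delta> h i j x y = ws (theta \<Delta> h i j x y) * wg (theta \<Delta> h i j x y)"

definition lattice_idx :: "(int \<times> int) set" where
  "lattice_idx = {(i, j). i mod 2 = j mod 2}"

definition interferer_idx :: "(int \<times> int) set" where
  "interferer_idx = lattice_idx - {(0, 0)}"

definition SNR :: "(real \<Rightarrow> real) \<Rightarrow> (real \<Rightarrow> real) \<Rightarrow> real \<Rightarrow> real \<Rightarrow> real \<Rightarrow> real \<Rightarrow> real \<Rightarrow> real \<Rightarrow> real \<Rightarrow> real" where
  "SNR ws wg \<Delta> h \<alpha> psd \<sigma>2 x y =
     psd / \<sigma>2 * Dij \<Delta> h 0 0 x y powr (-\<alpha>) * Wij ws wg \<Delta> h 0 0 x y"

definition interf_term :: "(real \<Rightarrow> real) \<Rightarrow> (real \<Rightarrow> real) \<Rightarrow> real \<Rightarrow> real \<Rightarrow> real \<Rightarrow> real \<Rightarrow> real \<Rightarrow> int \<times> int \<Rightarrow> real" where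
  "interf_term ws wg \<Delta> h \<alpha> x y = (\<lambda>(i, j). Dij \<Delta> h i j x y powr (-\<alpha>) * Wij ws wg \<Delta> h i j x y)"

definition INR :: "(real \<Rightarrow> real) \<Rightarrow> (real \<Rightarrow> real) \<Rightarrow> real \<Rightarrow> real \<Rightarrow> real \<Rightarrow> real \<Rightarrow> real \<Rightarrow> real \<Rightarrow> real \<Rightarrow> real" where
  "INR ws wg \<Delta> h \<alpha> psd \<sigma>2 x y =
     psd / \<sigma>2 * infsum (interf_term ws wg \<Delta> h \<alpha> x y) interferer_idx"

definition SINR :: "(real \<Rightarrow> real) \<Rightarrow> (real \<Rightarrow> real) \<Rightarrow> real \<Rightarrow> real \<Rightarrow> real \<Rightarrow> real \<Rightarrow> real \<Rightarrow> real \<Rightarrow> real \<Rightarrow> real" where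
  "SINR ws wg \<Delta> h \<alpha> psd \<sigma>2 x y =
     SNR ws wg \<Delta> h \<alpha> psd \<sigma>2 x y / (INR ws wg \<Delta> h \<alpha> psd \<sigma>2 x y + 1)"

end

theory Submission
  imports Defs
begin

definition Wt :: "(real\<Rightarrow>real)\<Rightarrow>(real\<Rightarrow>real)\<Rightarrow>real\<Rightarrow>real\<Rightarrow>real" where
  "Wt ws wg h D = ws (arccos (h/D)) * wg (arccos (h/D))"

lemma arccos_range: assumes "h>0" "h \<le> D" shows "0 \<le> arccos (h/D)" "arccos (h/D) \<le> pi"
proof -
  have "h/D \<le> 1" "0 \<le> h/D" using assms by auto
  hence "h/D \<le> 1" "-1 \<le> h/D" by linarith+
  thus "0 \<le> arccos (h/D)" "arccos (h/D) \<le> pi" by (auto intro: arccos_lbound arccos_ubound)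
qed

lemma W_pos:
  assumes "h>0" "h \<le> D"
    and ws_range: "\<forall>t\<in>{0..pi}. 0 < ws t \<and> ws t \<le> 1"
    and wg_range: "\<forall>t\<in>{0..pi}. 0 < wg t \<and> wg t \<le> 1"
  shows "0 < Wt ws wg h D"
  using arccos_range[OF assms(1,2)] ws_range wg_range unfolding Wt_def by auto

lemma W_mono:
  assumes "h>0" "h \<le> D1" "D1 \<le> D2"
    and mono: "\<forall>a b. 0 \<le> a \<and> a \<le> b \<and> b \<le> pi \<longrightarrow> ws b * wg b \<le> ws a * wg a"
  shows "Wt ws wg h D2 \<le> Wt ws wg h D1"
proof -
  have "arccos (h/D1) \<le> arccos (h/D2)"
    using assms(1-3) by (intro arccos_le_arccos) (auto simp: divide_left_mono field_simps)
  moreover have "0 \<le> arccos (h/D1)" "arccos (h/D2) \<le> pi" using arccos_range assms by auto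
  ultimately show ?thesis using mono unfolding Wt_def by blast
qed

lemma order_prod:
  assumes "h>0" "h \<le> D0" "h \<le> D1" "h \<le> D2" "\<alpha> \<ge> 0"
    and mono: "\<forall>a b. 0 \<le> a \<and> a \<le> b \<and> b \<le> pi \<longrightarrow> ws b * wg b \<le> ws a * wg a"
    and W0: "Wt ws wg h D0 > 0"
  shows "((D0/D1) powr \<alpha> - (D0/D2) powr \<alpha>) * (Wt ws wg h D1 / Wt ws wg h D0 - Wt ws wg h D2 / Wt ws wg h D0) \<ge> 0"
proof (cases "D1 \<le> D2")
  case True
  have "(D0/D2) powr \<alpha> \<le> (D0/D1) powr \<alpha>"
    using assms True by (intro powr_mono2) (auto intro: divide_left_mono)
  moreover have "Wt ws wg h D2 / Wt ws wg h D0 \<le> Wt ws wg h D1 / Wt ws wg h D0"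
    using W_mono[OF assms(1,3) True mono] W0 by (intro divide_right_mono) auto
  ultimately show ?thesis by simp
next
  case False
  have "(D0/D1) powr \<alpha> \<le> (D0/D2) powr \<alpha>"
    using assms False by (intro powr_mono2) (auto intro: divide_left_mono)
  moreover have "Wt ws wg h D1 / Wt ws wg h D0 \<le> Wt ws wg h D2 / Wt ws wg h D0"
    using W_mono[OF assms(1,4) _ mono] False W0 by (intro divide_right_mono) auto
  ultimately show ?thesis by (simp add: mult_nonpos_nonpos)
qed

lemma pair_A:
  fixes \<beta> h u1 u2 d P :: real
  assumes "\<beta> \<ge> 0" "h>0" "u1 > 0" "u2 > 0" "d \<ge> h\<^sup>2" "P \<ge> 0" "u1 + u2 = 2*(d+P)"
  shows "(d/u1) powr \<beta> + (d/u2) powr \<beta> \<ge> 2*(h\<^sup>2/(h\<^sup>2+P)) powr \<beta>"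
proof -
  define X where "X = (d/u1) powr \<beta>"
  define Y where "Y = (d/u2) powr \<beta>"
  define m where "m = (d/(d+P)) powr \<beta>"
  have "h\<^sup>2 > 0" using assms(2) by simp
  hence dpos: "d > 0" using assms(5) by linarith
  have e: "(u1+u2)\<^sup>2 - 4*(u1*u2) = (u1-u2)\<^sup>2" by (simp add: power2_eq_square algebra_simps)
  have "(u1-u2)\<^sup>2 \<ge> 0" by simp
  moreover have "(u1+u2)\<^sup>2 = (2*(d+P))\<^sup>2" using assms(7) by simp
  ultimately have "4*(u1*u2) \<le> (2*(d+P))\<^sup>2" using e by linarith
  moreover have "(2*(d+P))\<^sup>2 = 4*(d+P)\<^sup>2" by (simp add: power2_eq_square algebra_simps)
  ultimately have u12: "u1*u2 \<le> (d+P)\<^sup>2" by linarith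
  have "d*d/((d+P)\<^sup>2) \<le> d*d/(u1*u2)"
    using u12 assms(3,4,6) dpos by (intro divide_left_mono) (auto intro!: mult_pos_pos)
  hence "(d/(d+P))*(d/(d+P)) \<le> (d/u1)*(d/u2)" by (simp add: power2_eq_square)
  hence "((d/(d+P))*(d/(d+P))) powr \<beta> \<le> ((d/u1)*(d/u2)) powr \<beta>"
    using assms dpos by (intro powr_mono2) auto
  moreover have "m*m = ((d/(d+P))*(d/(d+P))) powr \<beta>" unfolding m_def
    by (simp only: powr_mult)
  moreover have "X*Y = ((d/u1)*(d/u2)) powr \<beta>" unfolding X_def Y_def
    by (simp only: powr_mult)
  ultimately have XY: "m*m \<le> X*Y" by simp
  have nn: "X \<ge> 0" "Y \<ge> 0" "m \<ge> 0" unfolding X_def Y_def m_def by auto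
  have e2: "(X+Y)\<^sup>2 - 4*(X*Y) = (X-Y)\<^sup>2" by (simp add: power2_eq_square algebra_simps)
  have "(X-Y)\<^sup>2 \<ge> 0" by simp
  moreover have "(2*m)\<^sup>2 = 4*(m*m)" by (simp add: power2_eq_square)
  ultimately have "(2*m)\<^sup>2 \<le> (X+Y)\<^sup>2" using e2 XY by linarith
  hence "X + Y \<ge> 2*m" by (rule power2_le_imp_le) (use nn in auto)
  moreover have "(h\<^sup>2/(h\<^sup>2+P)) powr \<beta> \<le> m"
  proof -
    have hp: "h\<^sup>2 > 0" using assms(2) by simp
    have "P/(d+P) \<le> P/(h\<^sup>2+P)" using hp assms(5,6) dpos by (intro divide_left_mono) (auto intro!: mult_pos_pos add_pos_nonneg)
    moreover have "h\<^sup>2/(h\<^sup>2+P) = 1 - P/(h\<^sup>2+P)"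
    proof -
      have "h\<^sup>2+P > 0" using hp assms(6) by linarith
      thus ?thesis by (simp add: field_simps)
    qed
    moreover have "d/(d+P) = 1 - P/(d+P)"
    proof -
      have "d+P > 0" using dpos assms(6) by linarith
      thus ?thesis by (simp add: field_simps)
    qed
    ultimately have "h\<^sup>2/(h\<^sup>2+P) \<le> d/(d+P)" by linarith
    thus ?thesis unfolding m_def using hp assms(6) by (intro powr_mono2) (auto simp: assms(1))
  qed
  ultimately show ?thesis unfolding X_def Y_def by linarith
qed

lemma powr_sq: fixes a \<alpha> :: real assumes "a > 0" shows "a powr \<alpha> = (a\<^sup>2) powr (\<alpha>/2)"
proof -
  have "a\<^sup>2 = a powr 2" using assms by (simp add: powr_numeral)
  thus ?thesis by (simp add: powr_powr)
qed

lemma Dij_eq: "Dij \<Delta> h i j x y = sqrt ((real_of_int i*\<Delta>/2 - x)\<^sup>2 + (real_of_int j*\<Delta> * sqrt 3/2 - y)\<^sup>2 + h\<^sup>2)"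
  unfolding Dij_def sat_pos_def by (simp add: norm_Pair)

lemma Dij_ge: assumes "h > 0" shows "h \<le> Dij \<Delta> h i j x y"
proof -
  have "sqrt (h\<^sup>2) \<le> Dij \<Delta> h i j x y" unfolding Dij_eq by (intro real_sqrt_le_mono) simp
  thus ?thesis using assms by simp
qed

lemma Dij_shift: "Dij \<Delta> h i j (x - real_of_int a*\<Delta>/2) (y - real_of_int b*\<Delta> * sqrt 3/2) = Dij \<Delta> h (i+a) (j+b) x y"
  unfolding Dij_eq by (simp add: field_simps)

lemma Dij_negx: "Dij \<Delta> h i j (-x) y = Dij \<Delta> h (-i) j x y"
  unfolding Dij_eq by (simp add: power2_eq_square algebra_simps)
lemma Dij_negy: "Dij \<Delta> h i j x (-y) = Dij \<Delta> h i (-j) x y"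
  unfolding Dij_eq by (simp add: power2_eq_square algebra_simps)

lemma Dij_sq: "(Dij \<Delta> h i j x y)\<^sup>2 = (real_of_int i*\<Delta>/2 - x)\<^sup>2 + (real_of_int j*\<Delta> * sqrt 3/2 - y)\<^sup>2 + h\<^sup>2"
  unfolding Dij_eq by simp


lemma midpoint_convex:
  fixes f :: "real \<Rightarrow> real"
  assumes "convex_on {-c..c} f" "x \<in> {-c..c}"
  shows "2 * f 0 \<le> f x + f (-x)"
proof -
  have "-x \<in> {-c..c}" using assms(2) by auto
  from convex_onD[OF assms(1), of "1/2" x "-x", OF _ _ assms(2) this]
  show ?thesis by simp
qed

lemma cheb4:
  fixes a1 a2 a3 a4 r1 r2 r3 r4 :: real
  assumes "(a1-a2)*(r1-r2) \<ge> 0" "(a1-a3)*(r1-r3) \<ge> 0" "(a1-a4)*(r1-r4) \<ge> 0"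
    "(a2-a3)*(r2-r3) \<ge> 0" "(a2-a4)*(r2-r4) \<ge> 0" "(a3-a4)*(r3-r4) \<ge> 0"
  shows "(a1+a2+a3+a4)*(r1+r2+r3+r4) \<le> 4*(a1*r1+a2*r2+a3*r3+a4*r4)"
proof -
  have "4*(a1*r1+a2*r2+a3*r3+a4*r4) - (a1+a2+a3+a4)*(r1+r2+r3+r4) =
    (a1-a2)*(r1-r2) + (a1-a3)*(r1-r3) + (a1-a4)*(r1-r4) + (a2-a3)*(r2-r3) + (a2-a4)*(r2-r4) + (a3-a4)*(r3-r4)"
    by (simp add: algebra_simps)
  thus ?thesis using assms by linarith
qed

lemma Wij_Wt: "Wij ws wg \<Delta> h i j x y = Wt ws wg h (Dij \<Delta> h i j x y)"
  unfolding Wij_def theta_def Wt_def by simp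

lemma decomp:
  fixes D0 Dp W0 Wp \<alpha> :: real
  assumes "D0 > 0" "Dp > 0" "W0 > 0"
  shows "Dp powr (-\<alpha>) * Wp = (D0 powr (-\<alpha>) * W0) * ((D0/Dp) powr \<alpha> * (Wp/W0))"
  using assms by (simp add: powr_divide powr_minus field_simps)


lemma aux_div4: "(4::real)*p*(4*q) \<le> 4*C \<Longrightarrow> 4*(p*q) \<le> C" by linarith

lemma quad:
  fixes ws wg :: "real \<Rightarrow> real" and \<Delta> h \<alpha> x y b c :: real and i j :: int
  assumes hpos: "h > 0" and apos: "\<alpha> \<ge> 0"
    and ws_range: "\<forall>t\<in>{0..pi}. 0 < ws t \<and> ws t \<le> 1"
    and wg_range: "\<forall>t\<in>{0..pi}. 0 < wg t \<and> wg t \<le> 1"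
    and mono: "\<forall>a b. 0 \<le> a \<and> a \<le> b \<and> b \<le> pi \<longrightarrow> ws b * wg b \<le> ws a * wg a"
    and cx: "\<And>y. y \<in> {-c..c} \<Longrightarrow> convex_on {-b..b} (\<lambda>x. Wij ws wg \<Delta> h i j x y / Wij ws wg \<Delta> h 0 0 x y)"
    and cy: "\<And>x. x \<in> {-b..b} \<Longrightarrow> convex_on {-c..c} (\<lambda>y. Wij ws wg \<Delta> h i j x y / Wij ws wg \<Delta> h 0 0 x y)"
    and xin: "x \<in> {-b..b}" and yin: "y \<in> {-c..c}"
  defines "T \<equiv> \<lambda>x y. Dij \<Delta> h i j x y powr (-\<alpha>) * Wij ws wg \<Delta> h i j x y"
     and "S \<equiv> \<lambda>x y. Dij \<Delta> h 0 0 x y powr (-\<alpha>) * Wij ws wg \<Delta> h 0 0 x y"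
  shows "4 * S x y * (T 0 0 / S 0 0) \<le> T x y + T (-x) y + T x (-y) + T (-x) (-y)"
proof -
  define a where "a = (\<lambda>x y. (Dij \<Delta> h 0 0 x y / Dij \<Delta> h i j x y) powr \<alpha>)"
  define r where "r = (\<lambda>x y. Wij ws wg \<Delta> h i j x y / Wij ws wg \<Delta> h 0 0 x y)"
  have Dge: "\<And>i j x y. h \<le> Dij \<Delta> h i j x y" using Dij_ge[OF hpos] by blast
  have Dpos: "\<And>i j x y. 0 < Dij \<Delta> h i j x y" using Dge hpos less_le_trans by blast
  have Wpos: "\<And>i j x y. 0 < Wij ws wg \<Delta> h i j x y"
    unfolding Wij_Wt using W_pos[OF hpos Dge ws_range wg_range] by blast
  have TSar: "\<And>x y. T x y = S x y * (a x y * r x y)"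
    unfolding T_def S_def a_def r_def using Dpos Wpos by (intro decomp) auto
  have Ssym: "S (-x) y = S x y" "S x (-y) = S x y" "S (-x) (-y) = S x y"
    unfolding S_def Wij_Wt by (simp_all add: Dij_negx Dij_negy)
  have D0sym: "Dij \<Delta> h 0 0 (-x) y = Dij \<Delta> h 0 0 x y" "Dij \<Delta> h 0 0 x (-y) = Dij \<Delta> h 0 0 x y"
     "Dij \<Delta> h 0 0 (-x) (-y) = Dij \<Delta> h 0 0 x y"
    by (simp_all add: Dij_negx Dij_negy)
  have ord: "(a x1 y1 - a x2 y2) * (r x1 y1 - r x2 y2) \<ge> 0"
    if "Dij \<Delta> h 0 0 x1 y1 = Dij \<Delta> h 0 0 x2 y2" for x1 y1 x2 y2
  proof -
    have "Wt ws wg h (Dij \<Delta> h 0 0 x1 y1) > 0" using Wpos unfolding Wij_Wt by blast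
    have "((Dij \<Delta> h 0 0 x1 y1 / Dij \<Delta> h i j x1 y1) powr \<alpha> - (Dij \<Delta> h 0 0 x1 y1 / Dij \<Delta> h i j x2 y2) powr \<alpha>) *
      (Wt ws wg h (Dij \<Delta> h i j x1 y1) / Wt ws wg h (Dij \<Delta> h 0 0 x1 y1) - Wt ws wg h (Dij \<Delta> h i j x2 y2) / Wt ws wg h (Dij \<Delta> h 0 0 x1 y1)) \<ge> 0"
      by (rule order_prod[OF hpos Dge Dge Dge apos mono]) fact
    thus ?thesis unfolding a_def r_def Wij_Wt using that by simp
  qed
  have a_nn: "\<And>x y. a x y \<ge> 0" unfolding a_def by simp
  have r00: "r 0 0 \<ge> 0" unfolding r_def using Wpos[of i j 0 0] Wpos[of 0 0 0 0] by simp
  have pair: "a x' y' + a (-x') (-y') \<ge> 2 * a 0 0" for x' y'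
  proof -
    define px where "px = real_of_int i*\<Delta>/2"
    define py where "py = real_of_int j*\<Delta> * sqrt 3/2"
    have asq: "a u v = ((Dij \<Delta> h 0 0 u v)\<^sup>2 / (Dij \<Delta> h i j u v)\<^sup>2) powr (\<alpha>/2)" for u v
      unfolding a_def using powr_sq[of "Dij \<Delta> h 0 0 u v / Dij \<Delta> h i j u v" \<alpha>] Dpos
      by (simp add: power_divide)
    have s1: "(Dij \<Delta> h i j x' y')\<^sup>2 + (Dij \<Delta> h i j (-x') (-y'))\<^sup>2 = 2*((Dij \<Delta> h 0 0 x' y')\<^sup>2 + (px\<^sup>2+py\<^sup>2))"
      unfolding Dij_sq px_def py_def by (simp add: power2_eq_square algebra_simps)
    have s2: "(Dij \<Delta> h 0 0 (-x') (-y'))\<^sup>2 = (Dij \<Delta> h 0 0 x' y')\<^sup>2"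
      unfolding Dij_sq by (simp add: power2_eq_square)
    have s3: "(Dij \<Delta> h 0 0 0 0)\<^sup>2 = h\<^sup>2" "(Dij \<Delta> h i j 0 0)\<^sup>2 = h\<^sup>2 + (px\<^sup>2+py\<^sup>2)"
      unfolding Dij_sq px_def py_def by simp_all
    have dge: "(Dij \<Delta> h 0 0 x' y')\<^sup>2 \<ge> h\<^sup>2" using Dge hpos by (simp add: power_mono)
    have "2*(h\<^sup>2/(h\<^sup>2+(px\<^sup>2+py\<^sup>2))) powr (\<alpha>/2) \<le>
       ((Dij \<Delta> h 0 0 x' y')\<^sup>2/(Dij \<Delta> h i j x' y')\<^sup>2) powr (\<alpha>/2)
       + ((Dij \<Delta> h 0 0 x' y')\<^sup>2/(Dij \<Delta> h i j (-x') (-y'))\<^sup>2) powr (\<alpha>/2)"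
      using Dpos[of i j x' y'] Dpos[of i j "-x'" "-y'"] apos hpos dge s1 by (intro pair_A) auto
    thus ?thesis unfolding asq s2 s3 by simp
  qed
  have suma: "a x y + a (-x) y + a x (-y) + a (-x) (-y) \<ge> 4 * a 0 0"
    using pair[of x y] pair[of "-x" y] by simp
  have yin': "-y \<in> {-c..c}" using yin by auto
  have z1: "0 \<in> {-b..b}" "0 \<in> {-c..c}" using xin yin by auto
  have "2 * r 0 y \<le> r x y + r (-x) y" unfolding r_def by (rule midpoint_convex[OF cx[OF yin] xin])
  moreover have "2 * r 0 (-y) \<le> r x (-y) + r (-x) (-y)" unfolding r_def by (rule midpoint_convex[OF cx[OF yin'] xin])
  moreover have "2 * r 0 0 \<le> r 0 y + r 0 (-y)" unfolding r_def by (rule midpoint_convex[OF cy[OF z1(1)] yin])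
  ultimately have sumr: "r x y + r (-x) y + r x (-y) + r (-x) (-y) \<ge> 4 * r 0 0" by linarith
  have cheb: "(a x y + a (-x) y + a x (-y) + a (-x) (-y)) * (r x y + r (-x) y + r x (-y) + r (-x) (-y))
     \<le> 4 * (a x y * r x y + a (-x) y * r (-x) y + a x (-y) * r x (-y) + a (-x) (-y) * r (-x) (-y))"
    by (rule cheb4) (rule ord; simp add: D0sym)+
  have "(4 * a 0 0) * (4 * r 0 0) \<le> (a x y + a (-x) y + a x (-y) + a (-x) (-y)) * (r x y + r (-x) y + r x (-y) + r (-x) (-y))"
    using suma sumr a_nn r00 by (intro mult_mono) auto
  hence key: "4 * (a 0 0 * r 0 0) \<le> a x y * r x y + a (-x) y * r (-x) y + a x (-y) * r x (-y) + a (-x) (-y) * r (-x) (-y)"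
  proof -
    have "4 * a 0 0 * (4 * r 0 0) = 16*(a 0 0 * r 0 0)" by simp
    moreover have "4 * a 0 0 * (4 * r 0 0) \<le> 4 * (a x y * r x y + a (-x) y * r (-x) y + a x (-y) * r x (-y) + a (-x) (-y) * r (-x) (-y))"
      by (rule order.trans[OF \<open>(4 * a 0 0) * (4 * r 0 0) \<le> _\<close> cheb])
    ultimately show ?thesis by (intro aux_div4) simp
  qed
  have S00: "S 0 0 > 0" unfolding S_def using Dpos[of 0 0 0 0] Wpos[of 0 0 0 0] by simp
  have Sxy: "S x y > 0" unfolding S_def using Dpos[of 0 0 x y] Wpos[of 0 0 x y] by simp
  have "T 0 0 / S 0 0 = a 0 0 * r 0 0" using TSar[of 0 0] S00 by simp
  hence "4 * S x y * (T 0 0 / S 0 0) = S x y * (4 * (a 0 0 * r 0 0))" by simp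
  also have "\<dots> \<le> S x y * (a x y * r x y + a (-x) y * r (-x) y + a x (-y) * r x (-y) + a (-x) (-y) * r (-x) (-y))"
    using key Sxy by (intro mult_left_mono) auto
  also have "\<dots> = T x y + T (-x) y + T x (-y) + T (-x) (-y)"
    unfolding TSar Ssym by (simp add: algebra_simps)
  finally show ?thesis .
qed


lemma frac_cross: fixes A B C D :: real assumes "B>0" "D>0" "A*D \<le> C*B" shows "A/B \<le> C/D"
  using assms by (simp add: field_simps)

lemma S_mono:
  assumes "h>0" "h \<le> D1" "D1 \<le> D2" "\<alpha> \<ge> 0"
    and ws_range: "\<forall>t\<in>{0..pi}. 0 < ws t \<and> ws t \<le> 1"
    and wg_range: "\<forall>t\<in>{0..pi}. 0 < wg t \<and> wg t \<le> 1"
    and mono: "\<forall>a b. 0 \<le> a \<and> a \<le> b \<and> b \<le> pi \<longrightarrow> ws b * wg b \<le> ws a * wg a"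
  shows "D2 powr (-\<alpha>) * Wt ws wg h D2 \<le> D1 powr (-\<alpha>) * Wt ws wg h D1"
proof -
  have "D2 powr (-\<alpha>) \<le> D1 powr (-\<alpha>)" using assms(1-4) by (intro powr_mono2') auto
  moreover have "Wt ws wg h D2 \<le> Wt ws wg h D1" using W_mono[OF assms(1-3) mono] .
  moreover have "0 < Wt ws wg h D2" using W_pos[OF assms(1) _ ws_range wg_range] assms(2,3) by simp
  ultimately show ?thesis by (intro mult_mono) auto
qed

lemma negmod: "(-i::int) mod 2 = j mod 2 \<longleftrightarrow> i mod 2 = j mod 2"
   "(i::int) mod 2 = (-j) mod 2 \<longleftrightarrow> i mod 2 = j mod 2" by presburger+

lemma bij_negx: "bij_betw (\<lambda>(i,j). (-i,j)) interferer_idx interferer_idx"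
  by (rule bij_betwI[where g="\<lambda>(i,j). (-i,j)"]) (auto simp: interferer_idx_def lattice_idx_def negmod)

lemma bij_negy: "bij_betw (\<lambda>(i,j). (i,-j)) interferer_idx interferer_idx"
  by (rule bij_betwI[where g="\<lambda>(i,j). (i,-j)"]) (auto simp: interferer_idx_def lattice_idx_def negmod)

lemma bij_shift: assumes "(a::int) mod 2 = b mod 2"
  shows "bij_betw (\<lambda>(i,j). (i+a,j+b)) lattice_idx lattice_idx"
proof (rule bij_betwI[where g="\<lambda>(i,j). (i-a,j-b)"])
  show "(\<lambda>(i, j). (i + a, j + b)) \<in> lattice_idx \<rightarrow> lattice_idx"
    using assms unfolding lattice_idx_def by (auto; presburger)
  show "(\<lambda>(i, j). (i - a, j - b)) \<in> lattice_idx \<rightarrow> lattice_idx"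
    using assms unfolding lattice_idx_def by (auto; presburger)
qed auto

lemma tt_negx: "interf_term ws wg \<Delta> h \<alpha> (-x) y = (\<lambda>p. interf_term ws wg \<Delta> h \<alpha> x y ((\<lambda>(i,j). (-i,j)) p))"
  by (auto simp: interf_term_def Wij_Wt Dij_negx fun_eq_iff)
lemma tt_negy: "interf_term ws wg \<Delta> h \<alpha> x (-y) = (\<lambda>p. interf_term ws wg \<Delta> h \<alpha> x y ((\<lambda>(i,j). (i,-j)) p))"
  by (auto simp: interf_term_def Wij_Wt Dij_negy fun_eq_iff)
lemma tt_shift: "interf_term ws wg \<Delta> h \<alpha> (x - real_of_int a*\<Delta>/2) (y - real_of_int b*\<Delta> * sqrt 3/2)
   = (\<lambda>p. interf_term ws wg \<Delta> h \<alpha> x y ((\<lambda>(i,j). (i+a,j+b)) p))"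
  by (auto simp: interf_term_def Wij_Wt Dij_shift fun_eq_iff)

lemma int_bound: fixes z :: int and L s :: real assumes "s > 0" "\<bar>real_of_int z * s\<bar> \<le> L"
  shows "z \<in> {-ceiling (L/s)..ceiling (L/s)}"
proof -
  have "\<bar>real_of_int z\<bar> * s \<le> L" using assms by (simp add: abs_mult)
  hence "\<bar>real_of_int z\<bar> \<le> L/s" using assms(1) by (simp add: pos_le_divide_eq)
  also have "\<dots> \<le> real_of_int (ceiling (L/s))" by (rule le_of_int_ceiling)
  finally have "real_of_int \<bar>z\<bar> \<le> real_of_int (ceiling (L/s))" by simp
  hence "\<bar>z\<bar> \<le> ceiling (L/s)" by linarith
  thus ?thesis by auto
qed

lemma half_bound: fixes d z :: real assumes "d > 0" "z\<^sup>2 \<le> (d - z)\<^sup>2" shows "z \<le> d/2"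
proof -
  have "0 \<le> d*(d - 2*z)" using assms(2) by (simp add: power2_eq_square algebra_simps)
  hence "0 \<le> d - 2*z" using assms(1) by (simp add: zero_le_mult_iff)
  thus ?thesis by simp
qed


theorem proposition2:
  fixes ws wg :: "real \<Rightarrow> real" and \<Delta> h \<alpha> psd \<sigma>2 :: real
  assumes "\<Delta> > 0" and "h > 0" and "\<alpha> \<ge> 2" and "psd > 0" and "\<sigma>2 > 0"
    and ws_range: "\<forall>t\<in>{0..pi}. 0 < ws t \<and> ws t \<le> 1"
    and wg_range: "\<forall>t\<in>{0..pi}. 0 < wg t \<and> wg t \<le> 1"
    and finite_INR: "\<forall>x y. interf_term ws wg \<Delta> h \<alpha> x y summable_on interferer_idx"
    and mono: "\<forall>a b. 0 \<le> a \<and> a \<le> b \<and> b \<le> pi \<longrightarrow> ws b * wg b \<le> ws a * wg a"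
    and convex_x: "\<forall>(i, j)\<in>lattice_idx. \<forall>y\<in>{-\<Delta> * sqrt 3 / 2..\<Delta> * sqrt 3 / 2}.
        convex_on {-\<Delta>/2..\<Delta>/2} (\<lambda>x. Wij ws wg \<Delta> h i j x y / Wij ws wg \<Delta> h 0 0 x y)"
    and convex_y: "\<forall>(i, j)\<in>lattice_idx. \<forall>x\<in>{-\<Delta>/2..\<Delta>/2}.
        convex_on {-\<Delta> * sqrt 3 / 2..\<Delta> * sqrt 3 / 2} (\<lambda>y. Wij ws wg \<Delta> h i j x y / Wij ws wg \<Delta> h 0 0 x y)"
  shows "\<forall>x y. SINR ws wg \<Delta> h \<alpha> psd \<sigma>2 x y \<le> SINR ws wg \<Delta> h \<alpha> psd \<sigma>2 0 0"
proof -
  note Dp = assms(1) and hpos = assms(2)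
  have apos: "\<alpha> \<ge> 0" using assms(3) by simp
  define c where "c = psd/\<sigma>2"
  have cpos: "c > 0" unfolding c_def using assms(4,5) by simp
  define tt where "tt = interf_term ws wg \<Delta> h \<alpha>"
  define I where "I = (\<lambda>x y. infsum (tt x y) interferer_idx)"
  define S where "S = (\<lambda>x y. Dij \<Delta> h 0 0 x y powr (-\<alpha>) * Wij ws wg \<Delta> h 0 0 x y)"
  have SINR_eq: "\<And>x y. SINR ws wg \<Delta> h \<alpha> psd \<sigma>2 x y = c * S x y / (c * I x y + 1)"
    unfolding SINR_def SNR_def INR_def c_def S_def I_def tt_def by (simp add: mult.assoc)
  have summ: "\<And>x y. tt x y summable_on interferer_idx" using finite_INR unfolding tt_def by simp
  have Dge: "\<And>i j x y. h \<le> Dij \<Delta> h i j x y" using Dij_ge[OF hpos] by blast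
  have Dpos: "\<And>i j x y. 0 < Dij \<Delta> h i j x y" using Dge hpos less_le_trans by blast
  have Wpos: "\<And>i j x y. 0 < Wij ws wg \<Delta> h i j x y"
    unfolding Wij_Wt using W_pos[OF hpos Dge ws_range wg_range] by blast
  have Spos: "\<And>x y. S x y > 0" unfolding S_def
    using Dpos Wpos by (metis mult_pos_pos powr_gt_zero order_less_irrefl)
  have tt_nn: "\<And>x y p. tt x y p \<ge> 0" unfolding tt_def interf_term_def
    by (auto intro!: mult_nonneg_nonneg less_imp_le[OF Wpos])
  have Inn: "\<And>x y. I x y \<ge> 0" unfolding I_def using tt_nn by (simp add: infsum_nonneg)
  have Isymx: "\<And>x y. I (-x) y = I x y" unfolding I_def tt_def tt_negx
    by (rule infsum_reindex_bij_betw[OF bij_negx])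
  have Isymy: "\<And>x y. I x (-y) = I x y" unfolding I_def tt_def tt_negy
    by (rule infsum_reindex_bij_betw[OF bij_negy])
  have D00: "Dij \<Delta> h 0 0 0 0 = h" using hpos by (simp add: Dij_eq)
  have setx: "{-(\<Delta>/2)..\<Delta>/2} = {-\<Delta>/2..\<Delta>/2}" by simp
  have sety: "{-(\<Delta> * sqrt 3/2)..\<Delta> * sqrt 3/2} = {-\<Delta> * sqrt 3 / 2..\<Delta> * sqrt 3 / 2}" by simp
  have rect: "I 0 0 * S x y \<le> I x y * S 0 0"
    if xr: "x \<in> {-\<Delta>/2..\<Delta>/2}" and yr: "y \<in> {-\<Delta> * sqrt 3 / 2..\<Delta> * sqrt 3 / 2}" for x y
  proof -
    have pw: "4 * S x y / S 0 0 * tt 0 0 p \<le> tt x y p + tt (-x) y p + tt x (-y) p + tt (-x) (-y) p"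
      if pin: "p \<in> interferer_idx" for p
    proof -
      obtain i j where pij: "p = (i,j)" by (cases p)
      have hij: "(i,j) \<in> lattice_idx" using pin pij unfolding interferer_idx_def by simp
      have cx: "\<And>y. y \<in> {-(\<Delta> * sqrt 3/2)..\<Delta> * sqrt 3/2} \<Longrightarrow>
          convex_on {-(\<Delta>/2)..\<Delta>/2} (\<lambda>x. Wij ws wg \<Delta> h i j x y / Wij ws wg \<Delta> h 0 0 x y)"
        using convex_x hij unfolding setx sety by auto
      have cy: "\<And>x. x \<in> {-(\<Delta>/2)..\<Delta>/2} \<Longrightarrow>
          convex_on {-(\<Delta> * sqrt 3/2)..\<Delta> * sqrt 3/2} (\<lambda>y. Wij ws wg \<Delta> h i j x y / Wij ws wg \<Delta> h 0 0 x y)"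
        using convex_y hij unfolding setx sety by auto
      have xr': "x \<in> {-(\<Delta>/2)..\<Delta>/2}" and yr': "y \<in> {-(\<Delta> * sqrt 3/2)..\<Delta> * sqrt 3/2}"
        using xr yr unfolding setx sety by auto
      from quad[OF hpos apos ws_range wg_range mono cx cy xr' yr']
      show ?thesis unfolding pij tt_def interf_term_def S_def by (simp add: mult.assoc)
    qed
    have s1: "(\<lambda>p. tt x y p + tt (-x) y p) summable_on interferer_idx" using summ by (intro summable_on_add)
    have s2: "(\<lambda>p. tt x y p + tt (-x) y p + tt x (-y) p) summable_on interferer_idx"
      using summ s1 by (intro summable_on_add)
    have s3: "(\<lambda>p. tt x y p + tt (-x) y p + tt x (-y) p + tt (-x) (-y) p) summable_on interferer_idx"
      using summ s2 by (intro summable_on_add)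
    have "(4 * S x y / S 0 0) * I 0 0 = infsum (\<lambda>p. 4 * S x y / S 0 0 * tt 0 0 p) interferer_idx"
      unfolding I_def by (rule infsum_cmult_right'[symmetric])
    also have "\<dots> \<le> infsum (\<lambda>p. tt x y p + tt (-x) y p + tt x (-y) p + tt (-x) (-y) p) interferer_idx"
      using pw s3 summ by (intro infsum_mono summable_on_cmult_right) auto
    also have "\<dots> = I x y + I (-x) y + I x (-y) + I (-x) (-y)"
      unfolding I_def using summ s1 s2 by (simp add: infsum_add)
    also have "\<dots> = 4 * I x y" using Isymx[of x y] Isymy[of x y] Isymy[of "-x" y] by linarith
    finally have "(4 * S x y / S 0 0) * I 0 0 \<le> 4 * I x y" .
    moreover have "(4 * S x y / S 0 0) * I 0 0 = (4*(S x y * I 0 0)) / S 0 0" by simp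
    ultimately have "(4*(S x y * I 0 0)) / S 0 0 \<le> 4 * I x y" by simp
    hence "4*(S x y * I 0 0) \<le> 4 * I x y * S 0 0" using Spos[of 0 0] by (simp add: pos_divide_le_eq)
    thus ?thesis by (simp add: mult.commute)
  qed
  \<comment> \<open>translation invariance of the total received power\<close>
  have lat_eq: "lattice_idx = insert (0,0) interferer_idx" "(0::int,0::int) \<notin> interferer_idx"
    unfolding interferer_idx_def lattice_idx_def by auto
  have full: "\<And>x y. infsum (tt x y) lattice_idx = S x y + I x y"
    unfolding lat_eq(1) I_def using summ lat_eq(2)
    by (simp add: infsum_insert tt_def interf_term_def S_def)
  have summL: "\<And>x y. tt x y summable_on lattice_idx"
    unfolding lat_eq(1) using summ by (simp add: summable_on_insert_iff)
  have shift: "S (x - real_of_int a*\<Delta>/2) (y - real_of_int b*\<Delta> * sqrt 3/2) + I (x - real_of_int a*\<Delta>/2) (y - real_of_int b*\<Delta> * sqrt 3/2)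
      = S x y + I x y" if ab: "a mod 2 = b mod 2" for x y a b
  proof -
    have "infsum (tt (x - real_of_int a*\<Delta>/2) (y - real_of_int b*\<Delta> * sqrt 3/2)) lattice_idx = infsum (tt x y) lattice_idx"
      unfolding tt_def tt_shift by (rule infsum_reindex_bij_betw[OF bij_shift[OF ab]])
    thus ?thesis unfolding full .
  qed
  have Smono: "S x2 y2 \<le> S x1 y1" if "Dij \<Delta> h 0 0 x1 y1 \<le> Dij \<Delta> h 0 0 x2 y2" for x1 y1 x2 y2
    unfolding S_def Wij_Wt using S_mono[OF hpos Dge that apos ws_range wg_range mono] .
  \<comment> \<open>nearest lattice point\<close>
  have nearest: "\<exists>a b. a mod 2 = b mod 2 \<and> x - real_of_int a*\<Delta>/2 \<in> {-\<Delta>/2..\<Delta>/2}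
      \<and> y - real_of_int b*\<Delta> * sqrt 3/2 \<in> {-\<Delta> * sqrt 3 / 2..\<Delta> * sqrt 3 / 2}
      \<and> Dij \<Delta> h 0 0 (x - real_of_int a*\<Delta>/2) (y - real_of_int b*\<Delta> * sqrt 3/2) \<le> Dij \<Delta> h 0 0 x y" for x y
  proof -
    define f where "f = (\<lambda>p::int\<times>int. Dij \<Delta> h (fst p) (snd p) x y)"
    define F0 where "F0 = {p \<in> lattice_idx. f p \<le> f (0,0)}"
    define K where "K = 2*\<bar>x\<bar> + 2*\<bar>y\<bar>"
    have sub: "F0 \<subseteq> {-ceiling (K/(\<Delta>/2))..ceiling (K/(\<Delta>/2))} \<times> {-ceiling (K/(\<Delta> * sqrt 3/2))..ceiling (K/(\<Delta> * sqrt 3/2))}"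
    proof
      fix p assume "p \<in> F0"
      then obtain i j where pij: "p = (i,j)" and le: "Dij \<Delta> h i j x y \<le> Dij \<Delta> h 0 0 x y"
        unfolding F0_def f_def by (cases p) auto
      have "(Dij \<Delta> h i j x y)\<^sup>2 \<le> (Dij \<Delta> h 0 0 x y)\<^sup>2" using le Dpos by (intro power_mono) (auto intro: less_imp_le)
      hence sq: "(real_of_int i*\<Delta>/2 - x)\<^sup>2 + (real_of_int j*\<Delta> * sqrt 3/2 - y)\<^sup>2 \<le> x\<^sup>2 + y\<^sup>2"
        unfolding Dij_sq by simp
      have xy: "x\<^sup>2 + y\<^sup>2 \<le> (\<bar>x\<bar> + \<bar>y\<bar>)\<^sup>2" by (simp add: power2_eq_square algebra_simps)
      have "(real_of_int i*\<Delta>/2 - x)\<^sup>2 \<le> (\<bar>x\<bar> + \<bar>y\<bar>)\<^sup>2"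
        using sq xy zero_le_power2[of "real_of_int j*\<Delta> * sqrt 3/2 - y"] by linarith
      hence b1: "\<bar>real_of_int i*\<Delta>/2 - x\<bar> \<le> \<bar>x\<bar> + \<bar>y\<bar>"
      proof -
      have "\<bar>real_of_int i*\<Delta>/2 - x\<bar>\<^sup>2 \<le> (\<bar>x\<bar> + \<bar>y\<bar>)\<^sup>2" using \<open>(real_of_int i*\<Delta>/2 - x)\<^sup>2 \<le> _\<close> by (simp only: power2_abs)
      thus ?thesis by (rule power2_le_imp_le) simp
    qed
      have "(real_of_int j*\<Delta> * sqrt 3/2 - y)\<^sup>2 \<le> (\<bar>x\<bar> + \<bar>y\<bar>)\<^sup>2"
        using sq xy zero_le_power2[of "real_of_int i*\<Delta>/2 - x"] by linarith
      hence b2: "\<bar>real_of_int j*\<Delta> * sqrt 3/2 - y\<bar> \<le> \<bar>x\<bar> + \<bar>y\<bar>"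
      proof -
      have "\<bar>real_of_int j*\<Delta> * sqrt 3/2 - y\<bar>\<^sup>2 \<le> (\<bar>x\<bar> + \<bar>y\<bar>)\<^sup>2" using \<open>(real_of_int j*\<Delta> * sqrt 3/2 - y)\<^sup>2 \<le> _\<close> by (simp only: power2_abs)
      thus ?thesis by (rule power2_le_imp_le) simp
    qed
      have "\<bar>real_of_int i * (\<Delta>/2)\<bar> \<le> K"
    proof -
      have "\<bar>(real_of_int i*\<Delta>/2 - x) + x\<bar> \<le> \<bar>real_of_int i*\<Delta>/2 - x\<bar> + \<bar>x\<bar>" by (rule abs_triangle_ineq)
      moreover have "(real_of_int i*\<Delta>/2 - x) + x = real_of_int i * (\<Delta>/2)" by simp
      ultimately show ?thesis using b1 unfolding K_def by linarith
    qed
      hence "i \<in> {-ceiling (K/(\<Delta>/2))..ceiling (K/(\<Delta>/2))}" using Dp by (intro int_bound) auto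
      moreover have "\<bar>real_of_int j * (\<Delta> * sqrt 3/2)\<bar> \<le> K"
    proof -
      have "\<bar>(real_of_int j*\<Delta> * sqrt 3/2 - y) + y\<bar> \<le> \<bar>real_of_int j*\<Delta> * sqrt 3/2 - y\<bar> + \<bar>y\<bar>" by (rule abs_triangle_ineq)
      moreover have "(real_of_int j*\<Delta> * sqrt 3/2 - y) + y = real_of_int j * (\<Delta> * sqrt 3/2)" by simp
      ultimately show ?thesis using b2 unfolding K_def by linarith
    qed
      hence "j \<in> {-ceiling (K/(\<Delta> * sqrt 3/2))..ceiling (K/(\<Delta> * sqrt 3/2))}" using Dp by (intro int_bound) auto
      ultimately show "p \<in> {-ceiling (K/(\<Delta>/2))..ceiling (K/(\<Delta>/2))} \<times> {-ceiling (K/(\<Delta> * sqrt 3/2))..ceiling (K/(\<Delta> * sqrt 3/2))}"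
        unfolding pij by simp
    qed
    have finF: "finite F0" by (rule finite_subset[OF sub]) simp
    have z: "(0,0) \<in> F0" unfolding F0_def lattice_idx_def by simp
    hence ne: "F0 \<noteq> {}" by blast
    define q where "q = arg_min_on f F0"
    have qF: "q \<in> F0" unfolding q_def by (rule arg_min_if_finite(1)[OF finF ne])
    have qmin: "f q \<le> f p" if "p \<in> lattice_idx" for p
    proof (cases "p \<in> F0")
      case True thus ?thesis unfolding q_def by (rule arg_min_least[OF finF ne])
    next
      case False
      hence "f (0,0) < f p" using that unfolding F0_def by auto
      moreover have "f q \<le> f (0,0)" unfolding q_def by (rule arg_min_least[OF finF ne z])
      ultimately show ?thesis by simp
    qed
    obtain a b where qab: "q = (a,b)" by (cases q)
    have ab: "a mod 2 = b mod 2" using qF qab unfolding F0_def lattice_idx_def by simp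
    define x' where "x' = x - real_of_int a*\<Delta>/2"
    define y' where "y' = y - real_of_int b*\<Delta> * sqrt 3/2"
    have Dsh: "\<And>i j. Dij \<Delta> h i j x' y' = Dij \<Delta> h (i+a) (j+b) x y" unfolding x'_def y'_def by (rule Dij_shift)
    have cmp: "Dij \<Delta> h 0 0 x' y' \<le> Dij \<Delta> h i j x' y'" if "i mod 2 = j mod 2" for i j
    proof -
      have "(i+a, j+b) \<in> lattice_idx" using that ab unfolding lattice_idx_def by simp presburger
      from qmin[OF this] show ?thesis unfolding Dsh f_def qab by simp
    qed
    have sqc: "(Dij \<Delta> h 0 0 x' y')\<^sup>2 \<le> (Dij \<Delta> h i j x' y')\<^sup>2" if "i mod 2 = j mod 2" for i j
      using cmp[OF that] Dpos by (intro power_mono) (auto intro: less_imp_le)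
    have "x'\<^sup>2 \<le> (\<Delta> - x')\<^sup>2" using sqc[of 2 0] unfolding Dij_sq by simp
    hence r1: "x' \<le> \<Delta>/2" using Dp by (intro half_bound)
    have "(-x')\<^sup>2 \<le> (\<Delta> - (-x'))\<^sup>2" using sqc[of "-2" 0] unfolding Dij_sq by (simp add: power2_eq_square algebra_simps)
    hence r2: "-x' \<le> \<Delta>/2" using Dp by (intro half_bound)
    have "y'\<^sup>2 \<le> (\<Delta> * sqrt 3 - y')\<^sup>2" using sqc[of 0 2] unfolding Dij_sq by simp
    hence r3: "y' \<le> \<Delta> * sqrt 3/2" using Dp by (intro half_bound) auto
    have "(-y')\<^sup>2 \<le> (\<Delta> * sqrt 3 - (-y'))\<^sup>2" using sqc[of 0 "-2"] unfolding Dij_sq by (simp add: power2_eq_square algebra_simps)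
    hence r4: "-y' \<le> \<Delta> * sqrt 3/2" using Dp by (intro half_bound) auto
    have "Dij \<Delta> h 0 0 x' y' \<le> Dij \<Delta> h 0 0 x y" using cmp[of 0 0] unfolding Dsh
      using qmin[of "(0,0)"] unfolding f_def qab by (simp add: lattice_idx_def)
    moreover have "x' \<in> {-\<Delta>/2..\<Delta>/2}" using r1 r2 by simp
    moreover have "y' \<in> {-\<Delta> * sqrt 3 / 2..\<Delta> * sqrt 3 / 2}" using r3 r4 by simp
    ultimately show ?thesis using ab unfolding x'_def y'_def by blast
  qed
  show ?thesis
  proof (intro allI)
    fix x y
    obtain a b where ab: "a mod 2 = b mod 2"
      and xr: "x - real_of_int a*\<Delta>/2 \<in> {-\<Delta>/2..\<Delta>/2}"
      and yr: "y - real_of_int b*\<Delta> * sqrt 3/2 \<in> {-\<Delta> * sqrt 3 / 2..\<Delta> * sqrt 3 / 2}"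
      and dle: "Dij \<Delta> h 0 0 (x - real_of_int a*\<Delta>/2) (y - real_of_int b*\<Delta> * sqrt 3/2) \<le> Dij \<Delta> h 0 0 x y"
      using nearest[of x y] by blast
    define x' where "x' = x - real_of_int a*\<Delta>/2"
    define y' where "y' = y - real_of_int b*\<Delta> * sqrt 3/2"
    have P: "S x' y' + I x' y' = S x y + I x y" unfolding x'_def y'_def by (rule shift[OF ab])
    have SS': "S x y \<le> S x' y'" unfolding x'_def y'_def by (rule Smono[OF dle])
    have S'0: "S x' y' \<le> S 0 0" by (rule Smono) (simp add: D00 Dge)
    have R: "I 0 0 * S x' y' \<le> I x' y' * S 0 0" using rect xr yr unfolding x'_def y'_def by blast
    have d1: "c * I x y + 1 > 0" "c * I x' y' + 1 > 0" "c * I 0 0 + 1 > 0" using cpos Inn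
      by (auto intro!: add_nonneg_pos)
    have "c * S x y * (c * I x' y' + 1) \<le> c * S x' y' * (c * I x y + 1)"
    proof -
      have e: "c * S x' y' * (c * I x y + 1) - c * S x y * (c * I x' y' + 1)
         = c * (S x' y' - S x y) * (c * (S x y + I x y) + 1)"
        using P by (simp add: algebra_simps) (metis add_diff_cancel_left' distrib_left mult.commute)
      have "0 \<le> c * (S x' y' - S x y) * (c * (S x y + I x y) + 1)"
        using cpos SS' Spos[of x y] Inn[of x y] by (intro mult_nonneg_nonneg add_nonneg_nonneg) auto
      thus ?thesis using e by linarith
    qed
    hence q1: "c * S x y / (c * I x y + 1) \<le> c * S x' y' / (c * I x' y' + 1)"
      using d1 by (intro frac_cross) auto
    have "c * S x' y' * (c * I 0 0 + 1) \<le> c * S 0 0 * (c * I x' y' + 1)"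
    proof -
      have "c * c * (I 0 0 * S x' y') \<le> c * c * (I x' y' * S 0 0)" using R cpos by (intro mult_left_mono) auto
      moreover have "c * S x' y' \<le> c * S 0 0" using S'0 cpos by simp
      ultimately show ?thesis by (simp add: algebra_simps)
    qed
    hence q2: "c * S x' y' / (c * I x' y' + 1) \<le> c * S 0 0 / (c * I 0 0 + 1)"
      using d1 by (intro frac_cross) auto
    show "SINR ws wg \<Delta> h \<alpha> psd \<sigma>2 x y \<le> SINR ws wg \<Delta> h \<alpha> psd \<sigma>2 0 0"
      unfolding SINR_eq using q1 q2 by linarith
  qed
qed

end
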